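(* Let $P\subset\mathbb{R}^n$ be the moment polytope of a compact symplectic toric manifold. If the toric fiber $L(\mathbf{u})$ over a point $\mathbf{u}\in\mathrm{Int}(P)$ is strongly bulk-balanced, then $\mathbf{u}\in\mathrm{Trop}(P,\mathbf{m})$ for every $\mathbf{m}\in\mathbb{Z}^n$.
   Context: $P=\bigcap_{j=1}^m\{\mathbf{u}:\ell_j(\mathbf{u})\ge0\}$, $\ell_j(\mathbf{u})=\langle\mathbf{u},\mathbf{v}_j\rangle-\lambda_j$, $\mathbf{v}_j\in\mathbb{Z}^n$ primitive inward facet normals, half-spaces non-redundant. $\mathrm{Trop}(P,\mathbf{m})$ is the non-differentiable locus of $\mathbf{u}\mapsto\min\{\ell_j(\mathbf{u}):\langle\mathbf{m},\mathbf{v}_j\rangle\neq0\}$, i.e. where the minimum is attained by at least two distinct such indices; $\mathrm{Trop}(P,\mathbf{0})=\mathbb{R}^n$. Strongly bulk-balanced: let $S_1<S_2<\cdots$ be the distinct values of $\ell_j(\mathbf{u})$, $I_l=\{j:\ell_j(\mathbf{u})=S_l\}$, $A^\perp_l=\mathrm{span}_\mathbb{R}\{\mathbf{v}_j:j\in I_1\cup\dots\cup I_l\}$, $d_l=\dim A^\perp_l-\dim A^\perp_{l-1}$, $\kappa$ minimal with $A^\perp_\kappa=\mathbb{R}^n$. Choose $e^*_{r,s}\in\mathbb{Q}^n$ ($1\le r\le\kappa$, $1\le s\le d_r$) such that $\{e^*_{r,s}:r\le l\}$ is a $\mathbb{Q}$-basis of $A^\perp_l\cap\mathbb{Q}^n$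 for all $l$ and each $\mathbf{v}_j\in\bigoplus\mathbb{Z}e^*_{r,s}$; with $\mathbf{v}_j=\sum v_j^{r,s}e^*_{r,s}$ set $\mathbf{y}^{\mathbf{v}_j}=\prod y_{r,s}^{v_j^{r,s}}$. For $c\in(\mathbb{C}^* )^m$ let $F_l^c=\sum_{j\in I_l}c_j\mathbf{y}^{\mathbf{v}_j}$. $L(\mathbf{u})$ is strongly bulk-balanced if for some $c$ the system $y_{l,s}\partial F^c_l/\partial y_{l,s}=0$ ($1\le l\le\kappa$, $1\le s\le d_l$) has a solution in $(\mathbb{C}^* )^n$; the existence of such a solution does not depend on the choice of the $e^*_{r,s}$. *)

theory Defs
  imports "HOL-Analysis.Analysis"
begin

definition vreal :: "(nat \<Rightarrow> int^'n) \<Rightarrow> nat \<Rightarrow> real^'n" where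
  "vreal v j = (\<chi> k. real_of_int (v j $ k))"

definition ell :: "(nat \<Rightarrow> int^'n) \<Rightarrow> (nat \<Rightarrow> real) \<Rightarrow> nat \<Rightarrow> real^'n \<Rightarrow> real" where
  "ell v lam j u = u \<bullet> vreal v j - lam j"

definition polyP :: "nat \<Rightarrow> (nat \<Rightarrow> int^'n) \<Rightarrow> (nat \<Rightarrow> real) \<Rightarrow> (real^'n) set" where
  "polyP N v lam = {u. \<forall>j<N. ell v lam j u \<ge> 0}"

text \<open>Delzant polytope (= moment polytope of a compact symplectic toric manifold,
  by Delzant's theorem): compact, full-dimensional, primitive inward normals,
  non-redundant half-spaces, and at each vertex exactly n facets meet whose normals
  form a Z-basis of Z^n.\<close>

definition delzant :: "nat \<Rightarrow> (nat \<Rightarrow> int^'n) \<Rightarrow> (nat \<Rightarrow> real) \<Rightarrow> bool" where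
  "delzant N v lam \<longleftrightarrow>
     bounded (polyP N v lam) \<and> interior (polyP N v lam) \<noteq> {} \<and>
     (\<forall>j<N. \<forall>d::int. (\<forall>k. d dvd v j $ k) \<longrightarrow> \<bar>d\<bar> = 1) \<and>
     (\<forall>j<N. {u. \<forall>i<N. i \<noteq> j \<longrightarrow> ell v lam i u \<ge> 0} \<noteq> polyP N v lam) \<and>
     (\<forall>x. x extreme_point_of (polyP N v lam) \<longrightarrow>
        card {j. j < N \<and> ell v lam j x = 0} = CARD('n) \<and>
        (\<forall>w::int^'n. \<exists>c::nat \<Rightarrow> int.
            w = (\<Sum>j\<in>{j. j < N \<and> ell v lam j x = 0}. c j *s v j)))"

definition trop :: "nat \<Rightarrow> (nat \<Rightarrow> int^'n) \<Rightarrow> (nat \<Rightarrow> real) \<Rightarrow> int^'n \<Rightarrow> (real^'n) set" where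
  "trop N v lam m =
     (if m = 0 then UNIV else
      {u. let Jm = {j. j < N \<and> (\<Sum>k\<in>UNIV. m $ k * v j $ k) \<noteq> 0} in
          \<exists>j\<in>Jm. \<exists>j'\<in>Jm. j \<noteq> j' \<and> ell v lam j u = ell v lam j' u \<and>
             (\<forall>i\<in>Jm. ell v lam j u \<le> ell v lam i u)})"

text \<open>Level data at u: S_1 < S_2 < ... distinct values of ell_j(u) (1-based),
  I_l, A^perp_l, kappa.\<close>

definition Sval :: "nat \<Rightarrow> (nat \<Rightarrow> int^'n) \<Rightarrow> (nat \<Rightarrow> real) \<Rightarrow> real^'n \<Rightarrow> nat \<Rightarrow> real" where
  "Sval N v lam u l = sorted_list_of_set ((\<lambda>j. ell v lam j u) ` {..<N}) ! (l - 1)"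

definition Ilev :: "nat \<Rightarrow> (nat \<Rightarrow> int^'n) \<Rightarrow> (nat \<Rightarrow> real) \<Rightarrow> real^'n \<Rightarrow> nat \<Rightarrow> nat set" where
  "Ilev N v lam u l =
     (if 1 \<le> l \<and> l \<le> card ((\<lambda>j. ell v lam j u) ` {..<N})
      then {j. j < N \<and> ell v lam j u = Sval N v lam u l} else {})"

definition Aperp :: "nat \<Rightarrow> (nat \<Rightarrow> int^'n) \<Rightarrow> (nat \<Rightarrow> real) \<Rightarrow> real^'n \<Rightarrow> nat \<Rightarrow> (real^'n) set" where
  "Aperp N v lam u l = span (vreal v ` {j. \<exists>r\<in>{1..l}. j \<in> Ilev N v lam u r})"

definition kappa :: "nat \<Rightarrow> (nat \<Rightarrow> int^'n) \<Rightarrow> (nat \<Rightarrow> real) \<Rightarrow> real^'n \<Rightarrow> nat" where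
  "kappa N v lam u = (LEAST l. Aperp N v lam u l = UNIV)"

text \<open>Adapted basis: the basis vectors e*_{r,s} are indexed by i :: 'n, with
  lev i = r the filtration level; {e_i : lev i \<le> l} is a Q-basis of
  A^perp_l \<inter> Q^n, and v_j = \<Sum>_i kc j i e_i with integer kc.\<close>

definition adapted_basis ::
  "nat \<Rightarrow> (nat \<Rightarrow> int^'n) \<Rightarrow> (nat \<Rightarrow> real) \<Rightarrow> real^'n \<Rightarrow>
   ('n \<Rightarrow> real^'n) \<Rightarrow> ('n \<Rightarrow> nat) \<Rightarrow> (nat \<Rightarrow> 'n \<Rightarrow> int) \<Rightarrow> bool" where
  "adapted_basis N v lam u e lev kc \<longleftrightarrow>
     (\<forall>i k. e i $ k \<in> \<rat>) \<and>
     (\<forall>i. 1 \<le> lev i \<and> lev i \<le> kappa N v lam u) \<and>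
     (\<forall>l\<in>{1..kappa N v lam u}.
        (\<forall>i. lev i \<le> l \<longrightarrow> e i \<in> Aperp N v lam u l) \<and>
        (\<forall>q::'n \<Rightarrow> real. (\<forall>i. lev i \<le> l \<longrightarrow> q i \<in> \<rat>) \<and>
             (\<Sum>i\<in>{i. lev i \<le> l}. q i *\<^sub>R e i) = 0 \<longrightarrow> (\<forall>i. lev i \<le> l \<longrightarrow> q i = 0)) \<and>
        (\<forall>w. (\<forall>k. w $ k \<in> \<rat>) \<and> w \<in> Aperp N v lam u l \<longrightarrow>
             (\<exists>q::'n \<Rightarrow> real. (\<forall>i. lev i \<le> l \<longrightarrow> q i \<in> \<rat>) \<and>
                 w = (\<Sum>i\<in>{i. lev i \<le> l}. q i *\<^sub>R e i)))) \<and>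
     (\<forall>j<N. vreal v j = (\<Sum>i\<in>UNIV. real_of_int (kc j i) *\<^sub>R e i))"

definition Fpot :: "nat \<Rightarrow> (nat \<Rightarrow> int^'n) \<Rightarrow> (nat \<Rightarrow> real) \<Rightarrow> real^'n \<Rightarrow>
   (nat \<Rightarrow> 'n \<Rightarrow> int) \<Rightarrow> nat \<Rightarrow> (nat \<Rightarrow> complex) \<Rightarrow> ('n \<Rightarrow> complex) \<Rightarrow> complex" where
  "Fpot N v lam u kc l c y = (\<Sum>j\<in>Ilev N v lam u l. c j * (\<Prod>i\<in>UNIV. y i powi kc j i))"

definition strongly_bulk_balanced ::
  "nat \<Rightarrow> (nat \<Rightarrow> int^'n) \<Rightarrow> (nat \<Rightarrow> real) \<Rightarrow> real^'n \<Rightarrow> bool" where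
  "strongly_bulk_balanced N v lam u \<longleftrightarrow>
     (\<exists>e lev kc. adapted_basis N v lam u e lev kc \<and>
        (\<exists>(c::nat \<Rightarrow> complex) (y::'n \<Rightarrow> complex).
           (\<forall>j<N. c j \<noteq> 0) \<and> (\<forall>i. y i \<noteq> 0) \<and>
           (\<forall>i. y i * deriv (\<lambda>z. Fpot N v lam u kc (lev i) c (y(i := z))) (y i) = 0)))"

end

theory Submission imports Defs begin
lemma polyP_eq: "polyP N v lam = (\<Inter>j\<in>{..<N}. {u. lam j \<le> inner u (vreal v j)})"
  unfolding polyP_def ell_def by auto

lemma polyP_closed: "closed (polyP N v lam)"
  unfolding polyP_eq by (intro closed_INT ballI) (simp add: closed_halfspace_component_ge inner_commute closed_halfspace_ge)

lemma polyP_convex: "convex (polyP N v lam)"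
  unfolding polyP_eq
proof (intro convex_INT ballI)
  fix j show "convex {u. lam j \<le> inner u (vreal v j)}"
    using convex_halfspace_ge[of "lam j" "vreal v j"] by (simp add: inner_commute)
qed

lemma Jm_nonempty:
  fixes v :: "nat \<Rightarrow> int^'n" and m :: "int^'n"
  assumes "delzant N v lam" "m \<noteq> 0"
  shows "\<exists>j<N. (\<Sum>k\<in>UNIV. m $ k * v j $ k) \<noteq> 0"
proof (rule ccontr)
  assume H: "\<not> ?thesis"
  have "compact (polyP N v lam)" using assms(1) polyP_closed unfolding delzant_def
    by (simp add: compact_eq_bounded_closed)
  moreover have "polyP N v lam \<noteq> {}" using assms(1) unfolding delzant_def
    using interior_subset by blast
  ultimately obtain x where x: "x extreme_point_of (polyP N v lam)"
    using extreme_point_exists_convex polyP_convex by blast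
  then obtain c :: "nat \<Rightarrow> int" where c: "m = (\<Sum>j\<in>{j. j < N \<and> ell v lam j x = 0}. c j *s v j)"
    using assms(1) unfolding delzant_def by blast
  let ?J = "{j. j < N \<and> ell v lam j x = 0}"
  have mk: "m $ k = (\<Sum>j\<in>?J. c j * v j $ k)" for k
    by (subst c) (simp add: sum_component)
  have "(\<Sum>k\<in>UNIV. m $ k * m $ k) = (\<Sum>k\<in>UNIV. \<Sum>j\<in>?J. c j * (m $ k * v j $ k))"
    by (subst (2) mk) (simp add: sum_distrib_left mult.commute mult.left_commute)
  also have "\<dots> = (\<Sum>j\<in>?J. c j * (\<Sum>k\<in>UNIV. m $ k * v j $ k))"
    by (subst sum.swap) (simp add: sum_distrib_left)
  also have "\<dots> = 0" using H by auto
  finally have S: "(\<Sum>k\<in>UNIV. m $ k * m $ k) = 0" .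
  have "\<forall>k\<in>UNIV. m $ k * m $ k = 0"
    using sum_nonneg_eq_0_iff[of UNIV "\<lambda>k. m $ k * m $ k"] S by simp
  hence "m = 0" by (simp add: vec_eq_iff)
  thus False using assms(2) by simp
qed

lemma deriv_F:
  fixes y :: "'n::finite \<Rightarrow> complex" and K :: "nat \<Rightarrow> 'n \<Rightarrow> int"
  assumes "\<forall>k. y k \<noteq> 0" "finite J"
  shows "y i * deriv (\<lambda>z. \<Sum>j\<in>J. c j * (\<Prod>k\<in>UNIV. (y(i := z)) k powi K j k)) (y i)
       = (\<Sum>j\<in>J. c j * of_int (K j i) * (\<Prod>k\<in>UNIV. y k powi K j k))"
proof -
  define P where "P j = (\<Prod>k\<in>UNIV-{i}. y k powi K j k)" for j
  have eq: "(\<lambda>z. \<Sum>j\<in>J. c j * (\<Prod>k\<in>UNIV. (y(i := z)) k powi K j k))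
         = (\<lambda>z. \<Sum>j\<in>J. c j * (z powi K j i * P j))"
  proof
    fix z
    show "(\<Sum>j\<in>J. c j * (\<Prod>k\<in>UNIV. (y(i := z)) k powi K j k)) = (\<Sum>j\<in>J. c j * (z powi K j i * P j))"
      unfolding P_def
      by (intro sum.cong refl arg_cong2[where f="(*)"]) (simp add: prod.remove[of UNIV i])
  qed
  have d: "((\<lambda>z. \<Sum>j\<in>J. c j * (z powi K j i * P j)) has_field_derivative
      (\<Sum>j\<in>J. c j * (of_int (K j i) * y i powi (K j i - 1) * 1 * P j))) (at (y i))"
    using assms by (auto intro!: derivative_eq_intros simp: mult_ac)
  have "y i * (\<Sum>j\<in>J. c j * (of_int (K j i) * y i powi (K j i - 1) * 1 * P j))
      = (\<Sum>j\<in>J. c j * of_int (K j i) * (y i powi K j i * P j))"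
    unfolding sum_distrib_left
  proof (intro sum.cong refl)
    fix j
    have "y i * y i powi (K j i - 1) = y i powi K j i"
      using assms(1) by (simp add: power_int_diff field_simps)
    thus "y i * (c j * (of_int (K j i) * y i powi (K j i - 1) * 1 * P j)) = c j * of_int (K j i) * (y i powi K j i * P j)"
      by (metis (no_types, lifting) mult.assoc mult.left_commute mult_1_right)
  qed
  also have "\<dots> = (\<Sum>j\<in>J. c j * of_int (K j i) * (\<Prod>k\<in>UNIV. y k powi K j k))"
    unfolding P_def by (simp add: prod.remove[of UNIV i])
  finally show ?thesis unfolding eq using DERIV_imp_deriv[OF d] by simp
qed

lemma level_of:
  assumes "mu \<in> (\<lambda>j. ell v lam j u) ` {..<N}"
  obtains l where "1 \<le> l" "l \<le> card ((\<lambda>j. ell v lam j u) ` {..<N})"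
    "Ilev N v lam u l = {j. j < N \<and> ell v lam j u = mu}"
    "\<And>r j. r \<in> {1..l-1} \<Longrightarrow> j \<in> Ilev N v lam u r \<Longrightarrow> ell v lam j u < mu"
proof -
  let ?V = "(\<lambda>j. ell v lam j u) ` {..<N}"
  define xs where "xs = sorted_list_of_set ?V"
  have fin: "finite ?V" by simp
  have setxs: "set xs = ?V" unfolding xs_def using fin by simp
  have len: "length xs = card ?V" unfolding xs_def by simp
  have ss: "sorted_wrt (<) xs" unfolding xs_def by (rule strict_sorted_list_of_set)
  obtain p where p: "p < length xs" "xs ! p = mu" using assms setxs by (metis in_set_conv_nth)
  have S: "Sval N v lam u r = xs ! (r - 1)" for r unfolding Sval_def xs_def by simp
  show ?thesis
  proof (rule that[of "Suc p"])
    show "1 \<le> Suc p" by simp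
    show "Suc p \<le> card ?V" using p len by simp
    show "Ilev N v lam u (Suc p) = {j. j < N \<and> ell v lam j u = mu}"
      unfolding Ilev_def S using p len by simp
    fix r j assume r: "r \<in> {1..Suc p - 1}" and j: "j \<in> Ilev N v lam u r"
    have rc: "1 \<le> r \<and> r \<le> card ?V" using r p len by auto
    hence "ell v lam j u = xs ! (r - 1)" using j unfolding Ilev_def S by auto
    also have "\<dots> < xs ! p" using sorted_wrt_nth_less[OF ss, of "r-1" p] r p by auto
    finally show "ell v lam j u < mu" using p by simp
  qed
qed

lemma Ilev_sub: "Ilev N v lam u r \<subseteq> {..<N}"
  unfolding Ilev_def by auto

lemma Aperp_mono: "r \<le> s \<Longrightarrow> Aperp N v lam u r \<subseteq> Aperp N v lam u s"
  unfolding Aperp_def by (intro span_mono image_mono) auto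

theorem lemma6p3:
  fixes N :: nat and v :: "nat \<Rightarrow> int^'n" and lam :: "nat \<Rightarrow> real"
    and u :: "real^'n" and m :: "int^'n"
  assumes "delzant N v lam"
    and "u \<in> interior (polyP N v lam)"
    and "strongly_bulk_balanced N v lam u"
  shows "u \<in> trop N v lam m"
proof (cases "m = 0")
  case True thus ?thesis by (simp add: trop_def)
next
  case mne: False
  define g where "g j = ell v lam j u" for j
  define Jm where "Jm = {j. j < N \<and> (\<Sum>k\<in>UNIV. m $ k * v j $ k) \<noteq> 0}"
  define mr :: "real^'n" where "mr = (\<chi> k. real_of_int (m $ k))"
  have mrv: "mr \<bullet> vreal v j = real_of_int (\<Sum>k\<in>UNIV. m $ k * v j $ k)" for j
    by (simp add: mr_def vreal_def inner_vec_def)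
  have Jne: "Jm \<noteq> {}" using Jm_nonempty[OF assms(1) mne] Jm_def by auto
  have finJ: "finite Jm" unfolding Jm_def by auto
  define mu where "mu = Min (g ` Jm)"
  have "mu \<in> g ` Jm" unfolding mu_def using finJ Jne by (intro Min_in) auto
  then obtain j0 where j0: "j0 \<in> Jm" "g j0 = mu" by auto
  have mule: "\<And>i. i \<in> Jm \<Longrightarrow> mu \<le> g i" using finJ mu_def by auto
  show ?thesis
  proof (rule ccontr)
    assume nt: "u \<notin> trop N v lam m"
    have uniq: "j = j0" if "j \<in> Jm" "g j = mu" for j
    proof (rule ccontr)
      assume "j \<noteq> j0"
      hence "\<exists>a\<in>Jm. \<exists>b\<in>Jm. a \<noteq> b \<and> g a = g b \<and> (\<forall>i\<in>Jm. g a \<le> g i)"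
        using that j0 mule by metis
      hence "u \<in> trop N v lam m" unfolding trop_def Let_def g_def Jm_def using mne by simp
      thus False using nt by simp
    qed
    have j0N: "j0 < N" using j0 Jm_def by simp
    have "mu \<in> (\<lambda>j. ell v lam j u) ` {..<N}" using j0 j0N g_def by auto
    then obtain l where l1: "1 \<le> l" and lI: "Ilev N v lam u l = {j. j < N \<and> g j = mu}"
      and lless: "\<And>r j. r \<in> {1..l-1} \<Longrightarrow> j \<in> Ilev N v lam u r \<Longrightarrow> g j < mu"
      using level_of unfolding g_def by metis
    have orth: "mr \<bullet> w = 0" if "w \<in> Aperp N v lam u (l-1)" for w
    proof -
      have "orthogonal mr w"
      proof (rule orthogonal_to_span)
        show "w \<in> span (vreal v ` {j. \<exists>r\<in>{1..l-1}. j \<in> Ilev N v lam u r})"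
          using that unfolding Aperp_def .
        fix z assume "z \<in> vreal v ` {j. \<exists>r\<in>{1..l-1}. j \<in> Ilev N v lam u r}"
        then obtain j r where z: "z = vreal v j" "r \<in> {1..l-1}" "j \<in> Ilev N v lam u r" by auto
        have "j < N" using z(3) Ilev_sub by blast
        moreover have "g j < mu" using lless z by blast
        ultimately have "j \<notin> Jm" using mule by force
        hence "(\<Sum>k\<in>UNIV. m $ k * v j $ k) = 0" using \<open>j < N\<close> Jm_def by simp
        hence "mr \<bullet> z = 0" by (simp only: z(1) mrv of_int_0)
        thus "orthogonal mr z" by (simp add: orthogonal_def)
      qed
      thus ?thesis by (simp add: orthogonal_def)
    qed
    obtain e lev kc c y where ab: "adapted_basis N v lam u e lev kc"
      and cne: "\<forall>j<N. c j \<noteq> 0" and yne: "\<forall>i. y i \<noteq> 0"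
      and crit: "\<forall>i. y i * deriv (\<lambda>z. Fpot N v lam u kc (lev i) c (y(i := z))) (y i) = 0"
      using assms(3) unfolding strongly_bulk_balanced_def by blast
    define ka where "ka = kappa N v lam u"
    have levb: "1 \<le> lev i \<and> lev i \<le> ka" for i using ab unfolding adapted_basis_def ka_def by blast
    have eA: "e i \<in> Aperp N v lam u (lev i)" for i
      using ab levb[of i] unfolding adapted_basis_def ka_def by auto
    have vdec: "vreal v j = (\<Sum>i\<in>UNIV. real_of_int (kc j i) *\<^sub>R e i)" if "j < N" for j
      using ab that unfolding adapted_basis_def by blast
    have K: "mr \<bullet> e i = 0" if "lev i < l" for i
    proof -
      have "lev i \<le> l - 1" using that by simp
      thus ?thesis using orth eA[of i] Aperp_mono[of "lev i" "l-1" N v lam u] by blast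
    qed
    have vinner: "mr \<bullet> vreal v j = (\<Sum>i\<in>UNIV. real_of_int (kc j i) * (mr \<bullet> e i))" if "j < N" for j
      using vdec[OF that] by (simp add: inner_sum_right)
    have "(\<Sum>k\<in>UNIV. m $ k * v j0 $ k) \<noteq> 0" using j0 Jm_def by simp
    hence j0nz: "mr \<bullet> vreal v j0 \<noteq> 0" unfolding mrv of_int_eq_0_iff .
    show False
    proof (cases "ka < l")
      case True
      hence "mr \<bullet> e i = 0" for i using K levb[of i] by simp
      hence "mr \<bullet> vreal v j0 = 0" using vinner[OF j0N] by simp
      thus False using j0nz by simp
    next
      case False
      hence lka: "l \<le> ka" by simp
      have ka1: "1 \<le> ka" using levb[of undefined] by simp
      have lvl: "l \<in> {1..ka}" using l1 lka by simp
      have kal: "ka \<in> {1..ka}" using ka1 by simp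
      have indep: "\<And>q::'n \<Rightarrow> real. (\<forall>i. lev i \<le> ka \<longrightarrow> q i \<in> \<rat>) \<and>
             (\<Sum>i\<in>{i. lev i \<le> ka}. q i *\<^sub>R e i) = 0 \<Longrightarrow> (\<forall>i. lev i \<le> ka \<longrightarrow> q i = 0)"
        using ab kal unfolding adapted_basis_def ka_def by blast
      have spanl: "\<And>w. (\<forall>k. w $ k \<in> \<rat>) \<and> w \<in> Aperp N v lam u l \<Longrightarrow>
             (\<exists>q::'n \<Rightarrow> real. (\<forall>i. lev i \<le> l \<longrightarrow> q i \<in> \<rat>) \<and>
                 w = (\<Sum>i\<in>{i. lev i \<le> l}. q i *\<^sub>R e i))"
        using ab lvl unfolding adapted_basis_def ka_def by blast
      have allka: "{i. lev i \<le> ka} = UNIV" using levb by auto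
      have Z: "kc j i = 0" if jI: "j \<in> Ilev N v lam u l" and li: "l < lev i" for j i
      proof -
        have jN: "j < N" using jI Ilev_sub by blast
        have "vreal v j \<in> Aperp N v lam u l" unfolding Aperp_def
          using jI l1 by (intro span_base imageI) auto
        moreover have "\<forall>k. vreal v j $ k \<in> \<rat>" by (simp add: vreal_def)
        ultimately obtain q where q: "\<forall>i. lev i \<le> l \<longrightarrow> q i \<in> \<rat>"
          "vreal v j = (\<Sum>i\<in>{i. lev i \<le> l}. q i *\<^sub>R e i)" using spanl by blast
        define q' where "q' i = (if lev i \<le> l then q i else 0) - real_of_int (kc j i)" for i
        have "(\<Sum>i\<in>UNIV. (if lev i \<le> l then q i else 0) *\<^sub>R e i) = (\<Sum>i\<in>{i. lev i \<le> l}. q i *\<^sub>R e i)"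
          by (simp add: sum.inter_filter[symmetric] if_distrib[of "\<lambda>t. t *\<^sub>R _"] cong: if_cong)
        hence "(\<Sum>i\<in>{i. lev i \<le> ka}. q' i *\<^sub>R e i) = 0"
          unfolding allka q'_def using q(2) vdec[OF jN]
          by (simp add: scaleR_diff_left sum_subtractf)
        moreover have "\<forall>i. lev i \<le> ka \<longrightarrow> q' i \<in> \<rat>" using q(1) unfolding q'_def by auto
        ultimately have "q' i = 0" using indep levb[of i] by blast
        thus ?thesis using li unfolding q'_def by simp
      qed
      define Y where "Y j = (\<Prod>k\<in>UNIV. y k powi kc j k)" for j
      have finI: "finite (Ilev N v lam u l)" by (rule finite_subset[OF Ilev_sub]) simp
      have D: "(\<Sum>j\<in>Ilev N v lam u l. c j * of_int (kc j i) * Y j) = 0" if "lev i = l" for i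
      proof -
        have "y i * deriv (\<lambda>z. Fpot N v lam u kc (lev i) c (y(i := z))) (y i) = 0" using crit[rule_format, of i] .
        hence 0: "y i * deriv (\<lambda>z. Fpot N v lam u kc l c (y(i := z))) (y i) = 0" using that by simp
        have "y i * deriv (\<lambda>z. Fpot N v lam u kc l c (y(i := z))) (y i) = (\<Sum>j\<in>Ilev N v lam u l. c j * of_int (kc j i) * Y j)"
          unfolding Fpot_def Y_def by (rule deriv_F[OF yne finI, of i c kc])
        thus ?thesis using 0 by simp
      qed
      have inner2: "mr \<bullet> vreal v j = (\<Sum>i\<in>UNIV. if lev i = l then real_of_int (kc j i) * (mr \<bullet> e i) else 0)"
        if jI: "j \<in> Ilev N v lam u l" for j
      proof -
        have jN: "j < N" using jI Ilev_sub by blast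
        show ?thesis unfolding vinner[OF jN]
        proof (intro sum.cong refl)
          fix i
          consider "lev i < l" | "lev i = l" | "l < lev i" by linarith
          thus "real_of_int (kc j i) * (mr \<bullet> e i) = (if lev i = l then real_of_int (kc j i) * (mr \<bullet> e i) else 0)"
            by cases (auto simp: K Z[OF jI])
        qed
      qed
      define T where "T = (\<Sum>j\<in>Ilev N v lam u l. c j * Y j * complex_of_real (mr \<bullet> vreal v j))"
      have "T = (\<Sum>j\<in>Ilev N v lam u l. \<Sum>i\<in>UNIV. c j * Y j *
           (if lev i = l then of_int (kc j i) * complex_of_real (mr \<bullet> e i) else 0))"
        unfolding T_def by (intro sum.cong refl) (auto simp: inner2 sum_distrib_left of_real_sum intro!: sum.cong)
      also have "\<dots> = (\<Sum>i\<in>UNIV. \<Sum>j\<in>Ilev N v lam u l. c j * Y j *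
           (if lev i = l then of_int (kc j i) * complex_of_real (mr \<bullet> e i) else 0))"
        by (rule sum.swap)
      also have "\<dots> = 0"
      proof (rule sum.neutral, rule ballI)
        fix i :: 'n assume "i \<in> UNIV"
        show "(\<Sum>j\<in>Ilev N v lam u l. c j * Y j *
           (if lev i = l then of_int (kc j i) * complex_of_real (mr \<bullet> e i) else 0)) = 0"
        proof (cases "lev i = l")
          case True
          have "(\<Sum>j\<in>Ilev N v lam u l. c j * Y j * (of_int (kc j i) * complex_of_real (mr \<bullet> e i)))
              = complex_of_real (mr \<bullet> e i) * (\<Sum>j\<in>Ilev N v lam u l. c j * of_int (kc j i) * Y j)"
            by (simp add: sum_distrib_left mult_ac)
          thus ?thesis using True D[OF True] by simp
        next
          case False thus ?thesis by simp
        qed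
      qed
      finally have T0: "T = 0" .
      have j0I: "j0 \<in> Ilev N v lam u l" using lI j0 j0N by simp
      have rest: "(\<Sum>j\<in>Ilev N v lam u l - {j0}. c j * Y j * complex_of_real (mr \<bullet> vreal v j)) = 0"
      proof (intro sum.neutral ballI)
        fix j assume jj: "j \<in> Ilev N v lam u l - {j0}"
        hence "j < N" "g j = mu" "j \<noteq> j0" using lI by auto
        hence "j \<notin> Jm" using uniq by blast
        hence "(\<Sum>k\<in>UNIV. m $ k * v j $ k) = 0" using \<open>j < N\<close> Jm_def by simp
        hence "mr \<bullet> vreal v j = 0" by (simp only: mrv of_int_0)
        thus "c j * Y j * complex_of_real (mr \<bullet> vreal v j) = 0" by simp
      qed
      have "T = c j0 * Y j0 * complex_of_real (mr \<bullet> vreal v j0)"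
        unfolding T_def by (subst sum.remove[OF finI j0I]) (simp only: rest add_0_right)
      moreover have "Y j0 \<noteq> 0" unfolding Y_def using yne by (simp add: power_int_eq_0_iff)
      ultimately have "T \<noteq> 0" using cne j0N j0nz by simp
      thus False using T0 by simp
    qed
  qed
qed

end
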